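(* Let $S$ be a simple extension of degree $n$ of a field $k$ of characteristic $0$, let $c$ be a primitive element of $S/k$, and let $x\in S$ be non-zero. Let $V_c=\{b\in S^*\mid cb^2\text{ is a primitive element of }S/k\}$. Then the set $W_{c,x}=\{b\in V_c\mid \{xb^{-1},cb^2\}\neq 0\}$ is non-empty and open in $S^*$.
   Context: A $k$-algebra $S$ is a simple extension of degree $n$ of the field $k$ if there is $c\in S^*$ (a primitive element) such that $1,c,\dots,c^{n-1}$ is a $k$-basis of $S$. For a primitive element $d$ and $y\in S$, $\{y,d\}$ denotes the coefficient $y_{n-1}$ in the unique expression $y=\sum_{i=0}^{n-1}y_i d^i$ with $y_i\in k$. $S$ is identified with $\mathbb{A}^n(k)$ via a $k$-basis and given the Zariski topology; $S^*$ carries the subspace topology. *)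

theory Defs
  imports Main
begin

text \<open>A k-algebra S is modelled by a commutative ring type 'b together with a ring
homomorphism iota from the field k (type 'a) into S (the structure map).\<close>

definition alg_hom :: "('a::field \<Rightarrow> 'b::comm_ring_1) \<Rightarrow> bool" where
  "alg_hom iota \<longleftrightarrow> iota 1 = 1 \<and> (\<forall>a b. iota (a + b) = iota a + iota b)
                  \<and> (\<forall>a b. iota (a * b) = iota a * iota b)"

definition prim_elem :: "('a::field \<Rightarrow> 'b::comm_ring_1) \<Rightarrow> nat \<Rightarrow> 'b \<Rightarrow> bool" where
  "prim_elem iota n d \<longleftrightarrow> d dvd 1 \<and>
     (\<forall>y. \<exists>!a. (\<forall>i\<ge>n. a i = 0) \<and> y = (\<Sum>i<n. iota (a i) * d ^ i))"

definition coords :: "('a::field \<Rightarrow> 'b::comm_ring_1) \<Rightarrow> nat \<Rightarrow> 'b \<Rightarrow> 'b \<Rightarrow> (nat \<Rightarrow> 'a)" where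
  "coords iota n d y = (THE a. (\<forall>i\<ge>n. a i = 0) \<and> y = (\<Sum>i<n. iota (a i) * d ^ i))"

definition bracket :: "('a::field \<Rightarrow> 'b::comm_ring_1) \<Rightarrow> nat \<Rightarrow> 'b \<Rightarrow> 'b \<Rightarrow> 'a" where
  "bracket iota n y d = coords iota n d y (n - 1)"

definition inv_S :: "'b::comm_ring_1 \<Rightarrow> 'b" where
  "inv_S b = (SOME u. b * u = 1)"

inductive_set kpolys :: "((nat \<Rightarrow> 'a::field) \<Rightarrow> 'a) set" where
  const: "(\<lambda>v. c) \<in> kpolys"
| proj: "(\<lambda>v. v i) \<in> kpolys"
| add: "p \<in> kpolys \<Longrightarrow> q \<in> kpolys \<Longrightarrow> (\<lambda>v. p v + q v) \<in> kpolys"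
| mult: "p \<in> kpolys \<Longrightarrow> q \<in> kpolys \<Longrightarrow> (\<lambda>v. p v * q v) \<in> kpolys"

text \<open>Zariski open subsets of S, identifying S with A^n(k) via the basis
1, c, ..., c^(n-1) for a primitive element c.\<close>

definition zariski_open :: "('a::field \<Rightarrow> 'b::comm_ring_1) \<Rightarrow> nat \<Rightarrow> 'b \<Rightarrow> 'b set \<Rightarrow> bool" where
  "zariski_open iota n c U \<longleftrightarrow>
     (\<exists>P \<subseteq> kpolys. U = - {y. \<forall>p\<in>P. p (coords iota n c y) = 0})"

definition units_open :: "('a::field \<Rightarrow> 'b::comm_ring_1) \<Rightarrow> nat \<Rightarrow> 'b \<Rightarrow> 'b set \<Rightarrow> bool" where
  "units_open iota n c U \<longleftrightarrow>
     (\<exists>Z. zariski_open iota n c Z \<and> U = Z \<inter> {u. u dvd 1})"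

end

theory Submission imports Defs "Jordan_Normal_Form.Determinant" "HOL-Computational_Algebra.Polynomial" begin

definition fring :: "('x \<Rightarrow> 'a::comm_ring_1) set \<Rightarrow> bool" where
 "fring R \<longleftrightarrow> (\<forall>a. (\<lambda>_. a) \<in> R) \<and> (\<forall>f\<in>R. \<forall>g\<in>R. (\<lambda>x. f x + g x) \<in> R)
     \<and> (\<forall>f\<in>R. \<forall>g\<in>R. (\<lambda>x. f x * g x) \<in> R)"

lemma fring_const: "fring R \<Longrightarrow> (\<lambda>_. a) \<in> R"
  unfolding fring_def by blast
lemma fring_add: "fring R \<Longrightarrow> f \<in> R \<Longrightarrow> g \<in> R \<Longrightarrow> (\<lambda>x. f x + g x) \<in> R"
  unfolding fring_def by blast
lemma fring_mult: "fring R \<Longrightarrow> f \<in> R \<Longrightarrow> g \<in> R \<Longrightarrow> (\<lambda>x. f x * g x) \<in> R"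
  unfolding fring_def by blast

lemma fring_sum: assumes R: "fring R" and I: "finite I" and f: "\<And>i. i \<in> I \<Longrightarrow> (\<lambda>x. f i x) \<in> R"
  shows "(\<lambda>x. \<Sum>i\<in>I. f i x) \<in> R"
  using I f
proof (induction I rule: finite_induct)
  case empty
  then show ?case using fring_const[OF R, of 0] by simp
next
  case (insert a F)
  have "(\<lambda>x. f a x + (\<Sum>i\<in>F. f i x)) \<in> R"
    using insert by (intro fring_add[OF R]) auto
  then show ?case using insert by simp
qed

lemma fring_prod: assumes R: "fring R" and I: "finite I" and f: "\<And>i. i \<in> I \<Longrightarrow> (\<lambda>x. f i x) \<in> R"
  shows "(\<lambda>x. \<Prod>i\<in>I. f i x) \<in> R"
  using I f
proof (induction I rule: finite_induct)
  case empty
  then show ?case using fring_const[OF R, of 1] by simp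
next
  case (insert a F)
  have "(\<lambda>x. f a x * (\<Prod>i\<in>F. f i x)) \<in> R"
    using insert by (intro fring_mult[OF R]) auto
  then show ?case using insert by simp
qed

lemma fring_det:
  assumes R: "fring R" and F: "\<And>j i. j < n \<Longrightarrow> i < n \<Longrightarrow> (\<lambda>x. F x j i) \<in> R"
  shows "(\<lambda>x. det (mat n n (\<lambda>(j,i). F x j i))) \<in> R"
proof -
  have eq: "(\<lambda>x. det (mat n n (\<lambda>(j,i). F x j i))) =
     (\<lambda>x. \<Sum>p\<in>{p. p permutes {0..<n}}. of_int (sign p) * (\<Prod>i = 0..<n. F x i (p i)))"
  proof
    fix x
    show "det (mat n n (\<lambda>(j,i). F x j i)) = (\<Sum>p\<in>{p. p permutes {0..<n}}. of_int (sign p) * (\<Prod>i = 0..<n. F x i (p i)))"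
      apply (subst det_def'[of _ n])
       apply simp
      apply (intro sum.cong refl arg_cong2[where f="(*)"] prod.cong)
      using permutes_in_image by fastforce
  qed
  show ?thesis unfolding eq
    apply (rule fring_sum[OF R])
     apply (simp add: finite_permutations)
    apply (rule fring_mult[OF R fring_const[OF R]])
    apply (rule fring_prod[OF R], simp)
    using F permutes_in_image by fastforce
qed

lemma binom_aux: "(1 + t * z) ^ Suc m - 1 = t * (\<Sum>k\<le>m. of_nat (Suc m choose Suc k) * t ^ k * z ^ Suc k)"
  for t z :: "'b::comm_ring_1"
proof -
  have "(1 + t * z) ^ Suc m = (t * z + 1) ^ Suc m" by (simp add: add.commute)
  also have "\<dots> = (\<Sum>k\<le>Suc m. of_nat (Suc m choose k) * (t * z) ^ k * 1 ^ (Suc m - k))"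
    by (rule binomial_ring)
  also have "\<dots> = 1 + (\<Sum>k\<le>m. of_nat (Suc m choose Suc k) * (t * z) ^ Suc k)"
    by (subst sum.atMost_Suc_shift) simp
  finally show ?thesis by (simp add: sum_distrib_left power_mult_distrib mult_ac)
qed

lemma ex1_eq: "\<exists>!x. P x \<Longrightarrow> P a \<Longrightarrow> P b \<Longrightarrow> a = b" by blast

locale pctx =
  fixes iota :: "'a::field \<Rightarrow> 'b::comm_ring_1" and n :: nat and c :: 'b
  assumes hom: "alg_hom iota" and prim: "prim_elem iota n c"
begin

lemma iota_add: "iota (a + b) = iota a + iota b" using hom unfolding alg_hom_def by blast
lemma iota_mult: "iota (a * b) = iota a * iota b" using hom unfolding alg_hom_def by blast
lemma iota_one: "iota 1 = 1" using hom unfolding alg_hom_def by blast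
lemma iota_zero: "iota 0 = 0" using iota_add[of 0 0] by simp
lemma iota_sum: "iota (\<Sum>i\<in>I. f i) = (\<Sum>i\<in>I. iota (f i))"
  by (induction I rule: infinite_finite_induct) (auto simp: iota_zero iota_add)
lemma iota_minus: "iota (- a) = - iota a"
  using iota_add[of a "-a"] iota_zero by (simp add: eq_neg_iff_add_eq_0 add.commute)

definition co :: "'b \<Rightarrow> nat \<Rightarrow> 'a" where "co y = coords iota n c y"
definition Rep :: "(nat \<Rightarrow> 'b) \<Rightarrow> (nat \<Rightarrow> 'a) \<Rightarrow> 'b" where "Rep w a = (\<Sum>i<n. iota (a i) * w i)"
definition basis :: "(nat \<Rightarrow> 'b) \<Rightarrow> bool" where
  "basis w \<longleftrightarrow> (\<forall>y. \<exists>!a. (\<forall>i\<ge>n. a i = 0) \<and> y = Rep w a)"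
definition Mat :: "(nat \<Rightarrow> 'b) \<Rightarrow> 'a mat" where "Mat w = mat n n (\<lambda>(j,i). co (w i) j)"

lemma co_spec: "(\<forall>i\<ge>n. co y i = 0) \<and> y = (\<Sum>i<n. iota (co y i) * c ^ i)"
proof -
  have "\<exists>!a. (\<forall>i\<ge>n. a i = 0) \<and> y = (\<Sum>i<n. iota (a i) * c ^ i)"
    using prim unfolding prim_elem_def by blast
  from theI'[OF this] show ?thesis unfolding co_def coords_def .
qed

lemma co_zero_ge: "i \<ge> n \<Longrightarrow> co y i = 0" using co_spec by blast
lemma co_expand: "y = (\<Sum>i<n. iota (co y i) * c ^ i)" using co_spec by blast

lemma co_unique: "(\<And>i. i \<ge> n \<Longrightarrow> a i = 0) \<Longrightarrow> y = (\<Sum>i<n. iota (a i) * c ^ i) \<Longrightarrow> co y = a"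
proof -
  assume a: "\<And>i. i \<ge> n \<Longrightarrow> a i = 0" and y: "y = (\<Sum>i<n. iota (a i) * c ^ i)"
  have "\<exists>!a. (\<forall>i\<ge>n. a i = 0) \<and> y = (\<Sum>i<n. iota (a i) * c ^ i)"
    using prim unfolding prim_elem_def by blast
  then show ?thesis using co_spec[of y] a y by blast
qed

lemma co_inj: "co y = co z \<Longrightarrow> y = z"
  using co_expand[of y] co_expand[of z] by simp

lemma co_add: "co (y + z) = (\<lambda>i. co y i + co z i)"
  apply (rule co_unique)
   apply (simp add: co_zero_ge)
  apply (subst co_expand[of y], subst co_expand[of z])
  by (simp add: iota_add sum.distrib distrib_right)

lemma co_smult: "co (iota a * y) = (\<lambda>i. a * co y i)"
  apply (rule co_unique)
   apply (simp add: co_zero_ge)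
  apply (subst co_expand[of y])
  by (simp add: iota_mult sum_distrib_left mult.assoc)

lemma co_zero: "co 0 = (\<lambda>i. 0)"
  by (rule co_unique) (auto simp: iota_zero)

lemma co_sum: "co (\<Sum>k\<in>I. f k) = (\<lambda>i. \<Sum>k\<in>I. co (f k) i)"
  by (induction I rule: infinite_finite_induct) (auto simp: co_zero co_add)

lemma co_lin: "co (\<Sum>k\<in>I. iota (a k) * t k) = (\<lambda>j. \<Sum>k\<in>I. a k * co (t k) j)"
  by (simp add: co_sum co_smult)

lemma co_neg: "co (- y) = (\<lambda>i. - co y i)"
proof -
  have "co (iota (-1) * y) = (\<lambda>i. -1 * co y i)" by (rule co_smult)
  then show ?thesis by (simp add: iota_minus iota_one)
qed

lemma co_cpow: "e < n \<Longrightarrow> co (c ^ e) = (\<lambda>i. if i = e then 1 else 0)"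
proof -
  assume e: "e < n"
  have "(\<Sum>i<n. iota (if i = e then 1 else 0) * c ^ i) = (\<Sum>i<n. if i = e then c ^ i else 0)"
    by (rule sum.cong) (auto simp: iota_one iota_zero)
  also have "\<dots> = c ^ e" using e by simp
  finally show ?thesis using e by (intro co_unique) auto
qed

lemma co_mul: "co (y * z) j = (\<Sum>i1<n. \<Sum>i2<n. co y i1 * co z i2 * co (c ^ (i1 + i2)) j)"
proof -
  have "y * z = (\<Sum>i1<n. \<Sum>i2<n. iota (co y i1 * co z i2) * c ^ (i1 + i2))"
    apply (subst co_expand[of y], subst co_expand[of z])
    by (simp add: sum_product iota_mult power_add mult_ac)
  then have "co (y * z) j = (\<Sum>i1<n. \<Sum>i2<n. co (iota (co y i1 * co z i2) * c ^ (i1 + i2)) j)"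
    by (simp add: co_sum)
  then show ?thesis by (simp add: co_smult)
qed


lemma Rep_lin_co: "co (Rep w a) j = (\<Sum>i<n. a i * co (w i) j)"
  unfolding Rep_def by (simp add: co_lin)

lemma Mat_carrier: "Mat w \<in> carrier_mat n n" unfolding Mat_def by simp

lemma Mat_mult_vec: "Mat w *\<^sub>v vec n a = vec n (co (Rep w a))"
  by (rule eq_vecI) (auto simp: Mat_def Rep_lin_co scalar_prod_def mult.commute intro!: sum.cong)

lemma vec_co_eq: "vec n (co y) = vec n (co z) \<Longrightarrow> y = z"
proof -
  assume h: "vec n (co y) = vec n (co z)"
  have "co y = co z"
  proof
    fix i show "co y i = co z i"
    proof (cases "i < n")
      case True
      then show ?thesis using arg_cong[OF h, of "\<lambda>v. v $ i"] by simp
    qed (simp add: co_zero_ge)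
  qed
  then show ?thesis by (rule co_inj)
qed

lemma vec_eq_fun: "vec n a = vec n b \<Longrightarrow> (\<And>i. i \<ge> n \<Longrightarrow> a i = 0) \<Longrightarrow> (\<And>i. i \<ge> n \<Longrightarrow> b i = 0) \<Longrightarrow> a = b"
proof
  fix i assume h: "vec n a = vec n b" and a: "\<And>i. i \<ge> n \<Longrightarrow> a i = 0" and b: "\<And>i. i \<ge> n \<Longrightarrow> b i = 0"
  show "a i = b i"
  proof (cases "i < n")
    case True
    then show ?thesis using arg_cong[OF h, of "\<lambda>v. v $ i"] by simp
  qed (simp add: a b)
qed

lemma basis_det: "basis w \<longleftrightarrow> det (Mat w) \<noteq> 0"
proof
  assume bw: "basis w"
  show "det (Mat w) \<noteq> 0"
  proof
    assume "det (Mat w) = 0"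
    then obtain v where v: "v \<in> carrier_vec n" "v \<noteq> 0\<^sub>v n" "Mat w *\<^sub>v v = 0\<^sub>v n"
      using det_0_iff_vec_prod_zero_field[OF Mat_carrier] by blast
    define a where "a = (\<lambda>i. if i < n then v $ i else 0)"
    have va: "vec n a = v" using v(1) unfolding a_def by (auto intro!: eq_vecI)
    have "vec n (co (Rep w a)) = 0\<^sub>v n"
      using v(3) va Mat_mult_vec[of w a] by simp
    also have "\<dots> = vec n (co 0)" by (auto simp: co_zero)
    finally have "vec n (co (Rep w a)) = vec n (co 0)" .
    then have r0: "Rep w a = 0" by (rule vec_co_eq)
    have r1: "Rep w (\<lambda>_. 0) = 0" by (simp add: Rep_def iota_zero)
    from bw have "\<exists>!a. (\<forall>i\<ge>n. a i = 0) \<and> 0 = Rep w a" unfolding basis_def by blast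
    moreover have "(\<forall>i\<ge>n. a i = 0) \<and> 0 = Rep w a" using r0 unfolding a_def by auto
    moreover have "(\<forall>i\<ge>n. (\<lambda>_. 0::'a) i = 0) \<and> 0 = Rep w (\<lambda>_. 0)" using r1 by auto
    ultimately have "a = (\<lambda>_. 0)" by (rule ex1_eq[where P="\<lambda>a. (\<forall>i\<ge>n. a i = 0) \<and> 0 = Rep w a"])
    then have "v = 0\<^sub>v n" using va by (auto intro!: eq_vecI)
    with v(2) show False by simp
  qed
next
  assume d: "det (Mat w) \<noteq> 0"
  from det_non_zero_imp_unit[OF Mat_carrier d, of "()"]
  obtain B where B: "B \<in> carrier_mat n n" "B * Mat w = 1\<^sub>m n" "Mat w * B = 1\<^sub>m n"
    unfolding Units_def ring_mat_def by auto
  show "basis w" unfolding basis_def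
  proof
    fix y
    define v where "v = B *\<^sub>v vec n (co y)"
    define a where "a = (\<lambda>i. if i < n then v $ i else 0)"
    have vc: "v \<in> carrier_vec n" using B unfolding v_def by auto
    have va: "vec n a = v" using vc unfolding a_def by (auto intro!: eq_vecI)
    have "Mat w *\<^sub>v vec n a = Mat w *\<^sub>v (B *\<^sub>v vec n (co y))"
      unfolding va v_def ..
    also have "\<dots> = (Mat w * B) *\<^sub>v vec n (co y)"
      by (rule assoc_mult_mat_vec[symmetric, OF Mat_carrier B(1)]) simp
    also have "\<dots> = vec n (co y)" unfolding B(3) by simp
    finally have "vec n (co (Rep w a)) = vec n (co y)" unfolding Mat_mult_vec .
    then have ex: "y = Rep w a" by (rule vec_co_eq[symmetric])
    show "\<exists>!a. (\<forall>i\<ge>n. a i = 0) \<and> y = Rep w a"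
    proof (rule ex1I[of _ a])
      show "(\<forall>i\<ge>n. a i = 0) \<and> y = Rep w a" using ex unfolding a_def by auto
    next
      fix a2 assume a2: "(\<forall>i\<ge>n. a2 i = 0) \<and> y = Rep w a2"
      have "Mat w *\<^sub>v vec n a2 = Mat w *\<^sub>v vec n a"
        using a2 ex by (simp add: Mat_mult_vec)
      then have "B *\<^sub>v (Mat w *\<^sub>v vec n a2) = B *\<^sub>v (Mat w *\<^sub>v vec n a)" by simp
      then have "(B * Mat w) *\<^sub>v vec n a2 = (B * Mat w) *\<^sub>v vec n a"
        using assoc_mult_mat_vec[OF B(1) Mat_carrier[of w]] by simp
      then have "vec n a2 = vec n a" unfolding B(2) by simp
      then show "a2 = a"
      proof (rule vec_eq_fun)
        show "\<And>i. n \<le> i \<Longrightarrow> a2 i = 0" using a2 by auto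
        show "\<And>i. n \<le> i \<Longrightarrow> a i = 0" by (simp add: a_def)
      qed
    qed
  qed
qed

lemma Rep_mult: "Rep (\<lambda>i. w i * b) a = Rep w a * b"
  unfolding Rep_def by (simp add: sum_distrib_right mult.assoc)

lemma basis_mult_unit: assumes bw: "basis w" and bb: "b * b' = 1" shows "basis (\<lambda>i. w i * b)"
  unfolding basis_def
proof
  fix y
  have eq: "(y = Rep w a * b) \<longleftrightarrow> (y * b' = Rep w a)" for a
  proof
    assume "y = Rep w a * b" then show "y * b' = Rep w a" using bb by (simp add: mult.assoc)
  next
    assume "y * b' = Rep w a" then have "y * b' * b = Rep w a * b" by simp
    then show "y = Rep w a * b" using bb by (metis mult.assoc mult.commute mult_1_right)
  qed
  from bw have "\<exists>!a. (\<forall>i\<ge>n. a i = 0) \<and> y * b' = Rep w a" unfolding basis_def by blast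
  then show "\<exists>!a. (\<forall>i\<ge>n. a i = 0) \<and> y = Rep (\<lambda>i. w i * b) a"
    unfolding Rep_mult eq .
qed

lemma prim_basis: "prim_elem iota n d \<longleftrightarrow> d dvd 1 \<and> basis (\<lambda>i. d ^ i)"
  unfolding prim_elem_def basis_def Rep_def ..

lemma replace_Mat: "replace_col (Mat w) (vec n (co y)) k = Mat (w(k := y))"
  by (rule eq_matI) (auto simp: replace_col_def Mat_def)

lemma det_replace: assumes k: "k < n" shows "det (Mat (w(k := Rep w a))) = a k * det (Mat w)"
proof -
  have "det (Mat (w(k := Rep w a))) = det (replace_col (Mat w) (Mat w *\<^sub>v vec n a) k)"
    by (simp add: Mat_mult_vec replace_Mat)
  also have "\<dots> = vec n a $ k * det (Mat w)"
    by (rule cramer_lemma_mat[OF Mat_carrier _ k]) simp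
  finally show ?thesis using k by simp
qed

lemma Mat_cpow: "Mat (\<lambda>i. c ^ i) = 1\<^sub>m n"
  by (rule eq_matI) (auto simp: Mat_def co_cpow)


definition R1 :: "('b \<Rightarrow> 'a) set" where "R1 = {g. \<exists>p\<in>kpolys. g = (\<lambda>y. p (co y))}"
definition R2 :: "('a \<Rightarrow> 'a) set" where "R2 = {g. \<exists>q. g = poly q}"

lemma fring_R1: "fring R1"
  unfolding fring_def R1_def
proof (intro conjI ballI allI)
  fix a :: 'a show "(\<lambda>_. a) \<in> {g. \<exists>p\<in>kpolys. g = (\<lambda>y. p (co y))}"
    using kpolys.const[of a] by auto
next
  fix f g assume "f \<in> {g. \<exists>p\<in>kpolys. g = (\<lambda>y. p (co y))}" "g \<in> {g. \<exists>p\<in>kpolys. g = (\<lambda>y. p (co y))}"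
  then obtain p q where "p \<in> kpolys" "q \<in> kpolys" "f = (\<lambda>y. p (co y))" "g = (\<lambda>y. q (co y))" by auto
  then show "(\<lambda>x. f x + g x) \<in> {g. \<exists>p\<in>kpolys. g = (\<lambda>y. p (co y))}"
    and "(\<lambda>x. f x * g x) \<in> {g. \<exists>p\<in>kpolys. g = (\<lambda>y. p (co y))}"
    using kpolys.add[of p q] kpolys.mult[of p q] by auto
qed

lemma fring_R2: "fring R2"
  unfolding fring_def R2_def
proof (intro conjI ballI allI)
  fix a :: 'a show "(\<lambda>_. a) \<in> {g. \<exists>q. g = poly q}"
    by (auto intro!: exI[of _ "[:a:]"])
next
  fix f g assume "f \<in> {g :: 'a \<Rightarrow> 'a. \<exists>q. g = poly q}" "g \<in> {g :: 'a \<Rightarrow> 'a. \<exists>q. g = poly q}"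
  then obtain p q where "f = poly p" "g = poly q" by auto
  then show "(\<lambda>x. f x + g x) \<in> {g. \<exists>q. g = poly q}"
    by (auto intro!: exI[of _ "p + q"] ext)
  from \<open>f = poly p\<close> \<open>g = poly q\<close> show "(\<lambda>x. f x * g x) \<in> {g. \<exists>q. g = poly q}"
    by (auto intro!: exI[of _ "p * q"] ext)
qed

definition cm :: "('x \<Rightarrow> 'a) set \<Rightarrow> ('x \<Rightarrow> 'b) \<Rightarrow> bool" where
  "cm R F \<longleftrightarrow> (\<forall>j. (\<lambda>x. co (F x) j) \<in> R)"

lemma cm_const: "fring R \<Longrightarrow> cm R (\<lambda>_. y)"
  unfolding cm_def by (auto intro: fring_const)

lemma cm_add: "fring R \<Longrightarrow> cm R F \<Longrightarrow> cm R G \<Longrightarrow> cm R (\<lambda>x. F x + G x)"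
  unfolding cm_def by (auto simp: co_add intro: fring_add)

lemma cm_mul: assumes R: "fring R" and F: "cm R F" and G: "cm R G" shows "cm R (\<lambda>x. F x * G x)"
  unfolding cm_def co_mul
proof
  fix j
  show "(\<lambda>x. \<Sum>i1<n. \<Sum>i2<n. co (F x) i1 * co (G x) i2 * co (c ^ (i1 + i2)) j) \<in> R"
    using F G unfolding cm_def
    by (intro fring_sum[OF R] fring_mult[OF R] fring_const[OF R]) auto
qed

lemma cm_pow: assumes R: "fring R" and F: "cm R F" shows "cm R (\<lambda>x. F x ^ k)"
proof (induction k)
  case 0 then show ?case using cm_const[OF R, of 1] by simp
next
  case (Suc k) then show ?case using cm_mul[OF R F Suc] by simp
qed

lemma cm_sum: assumes R: "fring R" and I: "finite I" and F: "\<And>i. i \<in> I \<Longrightarrow> cm R (F i)"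
  shows "cm R (\<lambda>x. \<Sum>i\<in>I. F i x)"
  unfolding cm_def co_sum using F unfolding cm_def
  by (auto intro!: fring_sum[OF R I])

lemma cm_scal: assumes R: "fring R" and g: "g \<in> R" and F: "cm R F"
  shows "cm R (\<lambda>x. iota (g x) * F x)"
  unfolding cm_def co_smult using F g unfolding cm_def
  by (auto intro!: fring_mult[OF R])

lemma cm_neg: assumes R: "fring R" and F: "cm R F" shows "cm R (\<lambda>x. - F x)"
  unfolding cm_def co_neg
proof
  fix j
  have "(\<lambda>x. (-1) * co (F x) j) \<in> R" using F unfolding cm_def
    by (intro fring_mult[OF R] fring_const[OF R]) auto
  then show "(\<lambda>x. - co (F x) j) \<in> R" by simp
qed

lemma cm_R1_id: "cm R1 (\<lambda>y. y)"
  unfolding cm_def R1_def using kpolys.proj by fastforce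

lemma cm_R2_iota: "cm R2 (\<lambda>s. iota s)"
proof -
  have "cm R2 (\<lambda>s. iota ((\<lambda>s. s) s) * 1)"
    by (rule cm_scal[OF fring_R2 _ cm_const[OF fring_R2]]) (auto simp: R2_def intro!: exI[of _ "[:0,1:]"])
  then show ?thesis by simp
qed

lemma cm_det: assumes R: "fring R" and W: "\<And>i. i < n \<Longrightarrow> cm R (\<lambda>x. W x i)"
  shows "(\<lambda>x. det (Mat (W x))) \<in> R"
  unfolding Mat_def using W unfolding cm_def by (intro fring_det[OF R]) auto

definition wb :: "'b \<Rightarrow> nat \<Rightarrow> 'b" where "wb b = (\<lambda>i. c ^ i * b ^ (2 * i + 1))"
definition NN :: "'b \<Rightarrow> 'a" where "NN b = det (Mat (wb b))"
definition NN' :: "'b \<Rightarrow> 'b \<Rightarrow> 'a" where "NN' x b = det (Mat ((wb b)(n - 1 := x)))"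

lemma wb_eq: "(\<lambda>i. (c * b ^ 2) ^ i * b) = wb b"
  unfolding wb_def by (auto simp: power_mult_distrib power_mult[symmetric] mult.assoc)

lemma NN_unit: assumes "NN b \<noteq> 0" shows "b dvd 1"
proof -
  have "basis (wb b)" using assms basis_det NN_def by simp
  then obtain a where "1 = Rep (wb b) a" unfolding basis_def by blast
  also have "\<dots> = b * (\<Sum>i<n. iota (a i) * c ^ i * b ^ (2 * i))"
    unfolding Rep_def wb_def by (simp add: sum_distrib_left mult_ac)
  finally show ?thesis by (metis dvdI)
qed

lemma c_unit: "c dvd 1" using prim unfolding prim_elem_def by blast

lemma charW: assumes n: "n > 0" and b: "b dvd 1"
  shows "(prim_elem iota n (c * b ^ 2) \<and> bracket iota n (x * inv_S b) (c * b ^ 2) \<noteq> 0)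
     \<longleftrightarrow> (NN b \<noteq> 0 \<and> NN' x b \<noteq> 0)"
proof -
  obtain b' where bb: "b * b' = 1" using b by (metis dvdE)
  have ib: "b * inv_S b = 1" unfolding inv_S_def using bb by (rule someI)
  define d where "d = c * b ^ 2"
  have du: "d dvd 1" unfolding d_def using c_unit b by (simp add: unit_prod power2_eq_square)
  have pb: "prim_elem iota n d \<longleftrightarrow> NN b \<noteq> 0"
  proof
    assume "prim_elem iota n d"
    then have "basis (\<lambda>i. d ^ i)" using prim_basis by blast
    then have "basis (\<lambda>i. d ^ i * b)" using bb by (rule basis_mult_unit)
    then show "NN b \<noteq> 0" unfolding NN_def basis_det[symmetric] d_def wb_eq .
  next
    assume "NN b \<noteq> 0"
    then have "basis (\<lambda>i. d ^ i * b)" unfolding NN_def basis_det[symmetric] d_def wb_eq .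
    moreover have bb2: "b' * b = 1" using bb by (simp add: mult.commute)
    ultimately have "basis (\<lambda>i. (d ^ i * b) * b')" by (rule basis_mult_unit)
    then have "basis (\<lambda>i. d ^ i)" using bb by (simp add: mult.assoc)
    then show "prim_elem iota n d" using prim_basis du by blast
  qed
  show ?thesis
  proof (cases "NN b = 0")
    case True then show ?thesis using pb d_def by simp
  next
    case False
    then have pd: "prim_elem iota n d" using pb by simp
    define a where "a = coords iota n d (x * inv_S b)"
    have "\<exists>!a. (\<forall>i\<ge>n. a i = 0) \<and> x * inv_S b = (\<Sum>i<n. iota (a i) * d ^ i)"
      using pd unfolding prim_elem_def by blast
    from theI'[OF this] have a: "x * inv_S b = (\<Sum>i<n. iota (a i) * d ^ i)"
      unfolding a_def coords_def by blast
    have "x = x * inv_S b * b" using ib by (metis mult.assoc mult.commute mult_1_right)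
    also have "\<dots> = Rep (\<lambda>i. d ^ i * b) a" unfolding a Rep_mult by (simp add: Rep_def)
    finally have xa: "x = Rep (wb b) a" unfolding d_def wb_eq .
    have "NN' x b = a (n - 1) * NN b" unfolding NN'_def NN_def xa
      using n by (intro det_replace) simp
    moreover have "bracket iota n (x * inv_S b) d = a (n - 1)" unfolding bracket_def a_def ..
    ultimately show ?thesis using pd False d_def by simp
  qed
qed


lemma iota_of_nat: "iota (of_nat k) = of_nat k"
  by (induction k) (auto simp: iota_zero iota_one iota_add)

lemma wb_one: "wb 1 = (\<lambda>i. c ^ i)" unfolding wb_def by simp

lemma NN_one: "NN 1 = 1" unfolding NN_def wb_one Mat_cpow by simp

lemma Rep_cpow: "Rep (\<lambda>i. c ^ i) (co y) = y" unfolding Rep_def by (rule co_expand[symmetric])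

lemma sum_split_last: "n > 0 \<Longrightarrow> (\<Sum>i<n. f i) = f (n - 1) + (\<Sum>i<n - 1. f i)"
proof -
  assume "n > 0"
  then obtain k where k: "n = Suc k" by (cases n) auto
  show ?thesis unfolding k by (simp add: add.commute)
qed

lemma exists_good: assumes n: "n > 0" and x: "x \<noteq> 0" and ch: "\<And>k. (of_nat (Suc k) :: 'a) \<noteq> 0"
  and inf: "infinite (UNIV :: 'a set)"
  shows "\<exists>b. NN b \<noteq> 0 \<and> NN' x b \<noteq> 0"
proof (cases "co x (n - 1) = 0")
  case False
  have "NN' x 1 = det (Mat ((\<lambda>i. c ^ i)(n - 1 := Rep (\<lambda>i. c ^ i) (co x))))"
    unfolding NN'_def wb_one Rep_cpow ..
  also have "\<dots> = co x (n - 1) * det (Mat (\<lambda>i. c ^ i))" using n by (intro det_replace) simp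
  finally have "NN' x 1 = co x (n - 1)" by (simp add: Mat_cpow)
  then show ?thesis using False NN_one by (intro exI[of _ 1]) simp
next
  case True
  define X where "X = co x"
  define Sx where "Sx = {i. X i \<noteq> 0}"
  have Sx_sub: "Sx \<subseteq> {..<n}"
  proof
    fix i assume "i \<in> Sx"
    then have "co x i \<noteq> 0" unfolding Sx_def X_def by simp
    then show "i \<in> {..<n}" using co_zero_ge[of i x] by (cases "i < n") auto
  qed
  then have Sx_fin: "finite Sx" by (rule finite_subset) simp
  have "Sx \<noteq> {}"
  proof
    assume "Sx = {}"
    then have "co x = co 0" unfolding Sx_def X_def co_zero by auto
    then show False using x co_inj by blast
  qed
  define m where "m = Max Sx"
  have mS: "m \<in> Sx" unfolding m_def using Sx_fin \<open>Sx \<noteq> {}\<close> by (rule Max_in)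
  have m_le: "X i \<noteq> 0 \<Longrightarrow> i \<le> m" for i unfolding m_def using Sx_fin Sx_def by auto
  have Xm: "X m \<noteq> 0" using mS Sx_def by auto
  have mn1: "m < n" using mS Sx_sub by auto
  have mn2: "m \<noteq> n - 1" using Xm True X_def by auto
  have mn: "m < n - 1" using mn1 mn2 by linarith
  define z where "z = c ^ (n - 1 - m)"
  define bs where "bs s = 1 + iota s * z" for s
  define w where "w s = wb (bs s)" for s
  define inner where "inner s i = (\<Sum>k\<le>2 * i. of_nat ((2 * i + 1) choose Suc k) * iota s ^ k * z ^ Suc k)" for s i
  define u where "u s = - (\<Sum>i<n. iota (X i) * c ^ i * inner s i)" for s
  define W' where "W' s = (w s)(n - 1 := u s)" for s
  define r where "r s = det (Mat (W' s))" for s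
  define a where "a s = X(n - 1 := s)" for s
  have binom: "iota s * inner s i = bs s ^ (2 * i + 1) - 1" for s i
    unfolding inner_def bs_def using binom_aux[of "iota s" z "2 * i"] by simp
  have ident: "x = Rep (W' s) (a s)" for s
  proof -
    have Xn: "X (n - 1) = 0" using True X_def by simp
    have R1: "Rep (W' s) (a s) = iota s * u s + (\<Sum>i<n - 1. iota (X i) * w s i)"
      unfolding Rep_def W'_def a_def using n by (simp add: sum_split_last)
    have R2: "Rep (w s) X = (\<Sum>i<n - 1. iota (X i) * w s i)"
      unfolding Rep_def using n Xn by (simp add: sum_split_last iota_zero)
    have "iota s * u s = - (\<Sum>i<n. iota (X i) * c ^ i * (iota s * inner s i))"
      unfolding u_def by (simp add: sum_distrib_left mult_ac)
    also have "\<dots> = (\<Sum>i<n. iota (X i) * c ^ i) - (\<Sum>i<n. iota (X i) * (c ^ i * bs s ^ (2 * i + 1)))"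
      unfolding binom right_diff_distrib sum_subtractf mult_1_right minus_diff_eq by (simp add: mult.assoc)
    also have "\<dots> = x - Rep (w s) X"
      unfolding Rep_def w_def wb_def X_def co_expand[of x, symmetric] by simp
    finally show ?thesis using R1 R2 by simp
  qed
  have NN'_eq: "NN' x (bs s) = s * r s" for s
  proof -
    have "(wb (bs s))(n - 1 := x) = (W' s)(n - 1 := Rep (W' s) (a s))"
      using ident[of s] unfolding W'_def w_def by simp
    then have "NN' x (bs s) = a s (n - 1) * r s"
      unfolding NN'_def r_def using n by (simp add: det_replace)
    then show ?thesis unfolding a_def by simp
  qed
  have cm_bs: "cm R2 bs"
    unfolding bs_def by (intro cm_add[OF fring_R2] cm_const[OF fring_R2] cm_mul[OF fring_R2] cm_R2_iota)
  have cm_w: "cm R2 (\<lambda>s. w s i)" for i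
    unfolding w_def wb_def by (intro cm_mul[OF fring_R2] cm_const[OF fring_R2] cm_pow[OF fring_R2] cm_bs)
  have cm_u: "cm R2 u"
    unfolding u_def inner_def
    by (intro cm_neg[OF fring_R2] cm_sum[OF fring_R2] cm_mul[OF fring_R2] cm_const[OF fring_R2]
          cm_pow[OF fring_R2] cm_R2_iota finite_lessThan finite_atMost)
  have cm_W': "cm R2 (\<lambda>s. W' s i)" for i
    by (cases "i = n - 1") (auto simp: W'_def cm_u cm_w)
  have rR: "r \<in> R2" unfolding r_def by (rule cm_det[OF fring_R2 cm_W'])
  have NR: "(\<lambda>s. NN (bs s)) \<in> R2" unfolding NN_def using cm_w unfolding w_def
    by (intro cm_det[OF fring_R2]) auto
  obtain q1 where q1: "(\<lambda>s. NN (bs s)) = poly q1" using NR R2_def by auto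
  obtain qr where qr: "r = poly qr" using rR R2_def by auto
  have bs0: "bs 0 = 1" unfolding bs_def by (simp add: iota_zero)
  have "poly q1 0 = 1" using fun_cong[OF q1, of 0] bs0 NN_one by simp
  then have q1nz: "q1 \<noteq> 0" by auto
  have zero_pow: "(\<Sum>k\<le>M. f k * (0::'b) ^ k * g k) = f 0 * g 0" for M and f g :: "nat \<Rightarrow> 'b"
    by (induction M) auto
  have inner0: "inner 0 i = of_nat (2 * i + 1) * z" for i
    unfolding inner_def iota_zero zero_pow by simp
  define u0 where "u0 = - (\<Sum>i<n. iota (X i * of_nat (2 * i + 1)) * c ^ (i + (n - 1 - m)))"
  have u0: "u 0 = u0" unfolding u_def u0_def inner0 z_def iota_mult iota_of_nat
    by (simp add: power_add mult_ac)
  have "co u0 (n - 1) = - (\<Sum>i<n. X i * of_nat (2 * i + 1) * co (c ^ (i + (n - 1 - m))) (n - 1))"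
    unfolding u0_def by (simp add: co_neg co_sum co_smult)
  also have "(\<Sum>i<n. X i * of_nat (2 * i + 1) * co (c ^ (i + (n - 1 - m))) (n - 1))
      = (\<Sum>i<n. if i = m then X m * of_nat (2 * m + 1) else 0)"
  proof (rule sum.cong[OF refl])
    fix i assume "i \<in> {..<n}"
    show "X i * of_nat (2 * i + 1) * co (c ^ (i + (n - 1 - m))) (n - 1) = (if i = m then X m * of_nat (2 * m + 1) else 0)"
    proof (cases "X i = 0")
      case True then show ?thesis using Xm by auto
    next
      case False
      then have "i \<le> m" by (rule m_le)
      then have "i + (n - 1 - m) < n" using mn by linarith
      then have "co (c ^ (i + (n - 1 - m))) (n - 1) = (if i = m then 1 else 0)"
        using \<open>i \<le> m\<close> mn by (auto simp: co_cpow)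
      then show ?thesis by simp
    qed
  qed
  also have "\<dots> = X m * of_nat (2 * m + 1)" using mn by simp
  finally have cou0: "co u0 (n - 1) = - (X m * of_nat (2 * m + 1))" .
  have W'0: "W' 0 = (\<lambda>i. c ^ i)(n - 1 := Rep (\<lambda>i. c ^ i) (co u0))"
    unfolding W'_def w_def bs0 wb_one u0 Rep_cpow ..
  have "r 0 = co u0 (n - 1) * det (Mat (\<lambda>i. c ^ i))"
    unfolding r_def W'0 using n by (intro det_replace) simp
  then have "r 0 = - (X m * of_nat (2 * m + 1))" using cou0 by (simp add: Mat_cpow)
  moreover have "(of_nat (2 * m + 1) :: 'a) \<noteq> 0" using ch[of "2 * m"] by simp
  ultimately have "r 0 \<noteq> 0" using Xm by simp
  then have qrnz: "qr \<noteq> 0" using qr by auto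
  have "q1 * qr \<noteq> 0" using q1nz qrnz by simp
  then have "finite ({s. poly (q1 * qr) s = 0} \<union> {0})" by (simp add: poly_roots_finite)
  then obtain s where s: "s \<notin> {s. poly (q1 * qr) s = 0} \<union> {0}" using ex_new_if_finite[OF inf] by blast
  then have "NN (bs s) \<noteq> 0" "r s \<noteq> 0" "s \<noteq> 0" using fun_cong[OF q1, of s] qr by auto
  then show ?thesis using NN'_eq[of s] by (intro exI[of _ "bs s"]) simp
qed

end

theorem lemma3p7:
  fixes iota :: "'a::field_char_0 \<Rightarrow> 'b::comm_ring_1"
    and n :: nat and c x :: 'b
  assumes "alg_hom iota"
    and "prim_elem iota n c"
    and "x \<noteq> 0"
  shows "let V = {b. b dvd 1 \<and> prim_elem iota n (c * b ^ 2)};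
             W = {b \<in> V. bracket iota n (x * inv_S b) (c * b ^ 2) \<noteq> 0}
         in W \<noteq> {} \<and> units_open iota n c W"
proof -
  interpret P: pctx iota n c using assms(1,2) by unfold_locales
  have n: "n > 0"
  proof (rule ccontr)
    assume "\<not> n > 0"
    then have "n = 0" by simp
    then have "x = 0" using P.co_expand[of x] by simp
    with assms(3) show False by simp
  qed
  define W where "W = {b \<in> {b. b dvd 1 \<and> prim_elem iota n (c * b ^ 2)}. bracket iota n (x * inv_S b) (c * b ^ 2) \<noteq> 0}"
  have Weq: "W = {b. b dvd 1 \<and> P.NN b * P.NN' x b \<noteq> 0}"
  proof (rule Set.set_eqI)
    fix b
    show "b \<in> W \<longleftrightarrow> b \<in> {b. b dvd 1 \<and> P.NN b * P.NN' x b \<noteq> 0}"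
    proof (cases "b dvd 1")
      case True
      then show ?thesis unfolding W_def using P.charW[OF n True, of x] by simp
    qed (simp add: W_def)
  qed
  have "W \<noteq> {}"
  proof -
    obtain b where b: "P.NN b \<noteq> 0" "P.NN' x b \<noteq> 0"
    proof -
      have ch: "\<And>k. (of_nat (Suc k) :: 'a) \<noteq> 0" by (simp only: of_nat_eq_0_iff)
      show ?thesis using P.exists_good[OF n assms(3) ch infinite_UNIV_char_0] that by blast
    qed
    then have "b \<in> W" unfolding Weq using P.NN_unit by auto
    then show ?thesis by auto
  qed
  moreover have "units_open iota n c W"
  proof -
    have cmw: "P.cm P.R1 (\<lambda>y. P.wb y i)" for i
      unfolding P.wb_def by (intro P.cm_mul[OF P.fring_R1] P.cm_const[OF P.fring_R1] P.cm_pow[OF P.fring_R1] P.cm_R1_id)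
    have cmw': "P.cm P.R1 (\<lambda>y. ((P.wb y)(n - 1 := x)) i)" for i
      by (cases "i = n - 1") (auto simp: cmw P.cm_const[OF P.fring_R1])
    have "(\<lambda>y. P.NN y * P.NN' x y) \<in> P.R1"
      unfolding P.NN_def P.NN'_def
      by (intro fring_mult[OF P.fring_R1] P.cm_det[OF P.fring_R1] cmw cmw')
    then obtain p where p: "p \<in> kpolys" "(\<lambda>y. P.NN y * P.NN' x y) = (\<lambda>y. p (P.co y))"
      unfolding P.R1_def by auto
    define Z where "Z = - {y. \<forall>q\<in>{p}. q (coords iota n c y) = 0}"
    have "zariski_open iota n c Z" unfolding zariski_open_def Z_def using p(1) by blast
    moreover have "W = Z \<inter> {u. u dvd 1}"
    proof -
      have "Z = {y. P.NN y * P.NN' x y \<noteq> 0}"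
      proof -
        have "Z = {y. p (coords iota n c y) \<noteq> 0}" unfolding Z_def by blast
        then show ?thesis using fun_cong[OF p(2)] by (simp add: P.co_def)
      qed
      then show ?thesis unfolding Weq by blast
    qed
    ultimately show ?thesis unfolding units_open_def by blast
  qed
  ultimately show ?thesis unfolding W_def Let_def by simp
qed

end
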